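(* Let $\mathbb{F}$ be a field with $\mathrm{Char}(\mathbb{F})\neq 2,3$. Every $2$-dimensional diassociative algebra $(V,\dashv,\vdash)$ over $\mathbb{F}$ whose product $\dashv$ is not identically zero is isomorphic to one of the following dialgebras $\{A,B\}$ (for some value of the indicated parameter), and dialgebras from different items are pairwise non-isomorphic: <ol> <li>$D_{13}^1(\delta_1)$: $A=\begin{pmatrix}0&0&0&0\\1&0&0&0\end{pmatrix}$, $B=\begin{pmatrix}0&0&0&0\\ \delta_1&0&0&0\end{pmatrix}$, $\delta_1\in\mathbb{F}$;</li> <li>$D_3^2$: $A=\begin{pmatrix}1&0&0&0\\0&0&0&0\end{pmatrix}$, $B=\begin{pmatrix}1&0&0&0\\0&0&0&0\end{pmatrix}$;</li> <li>$D_3^3$: $A=\begin{pmatrix}1&0&0&0\\0&0&0&0\end{pmatrix}$, $B=\begin{pmatrix}1&0&0&0\\0&1&0&0\end{pmatrix}$;</li> <li>$D_3^4$: $A=\begin{pmatrix}1&0&0&0\\0&1&0&0\end{pmatrix}$, $B=\begin{pmatrix}1&0&0&0\\0&1&0&0\end{pmatrix}$;</li> <li>$D_3^5(\delta_1)$: $A=\begin{pmatrix}\frac12&0&0&0\\0&0&\frac12&0\end{pmatrix}$, $B=\begin{pmatrix}\frac12&0&0&0\\ \delta_1&0&0&0\end{pmatrix}$, $\delta_1\in\mathbb{F}$;</li> <li>$D_3^6$: $A=\begin{pmatrix}\frac12&0&0&0\\0&0&\frac12&0\end{pmatrix}$, $B=\begin{pmatrix}\frac12&0&0&0\\0&\frac12&0&0\end{pmatrix}$;</li>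 <li>$D_3^7$: $A=\begin{pmatrix}\frac12&0&0&0\\0&0&\frac12&0\end{pmatrix}$, $B=\begin{pmatrix}\frac12&0&0&0\\0&0&\frac12&0\end{pmatrix}$;</li> <li>$D_3^8(\alpha_4)$: $A=B=\begin{pmatrix}\frac12&0&0&\alpha_4\\0&\frac12&\frac12&0\end{pmatrix}$, $\alpha_4\in\mathbb{F}$.</li> </ol>
   Context: Let $\mathbb{F}$ be a field. A diassociative algebra (associative dialgebra) is a vector space $V$ over $\mathbb{F}$ with two bilinear products $\dashv,\vdash$ satisfying, for all $x,y,z\in V$: $(x\dashv y)\dashv z=x\dashv(y\dashv z)$; $x\dashv(y\dashv z)=x\dashv(y\vdash z)$; $(x\vdash y)\dashv z=x\vdash(y\dashv z)$; $(x\dashv y)\vdash z=(x\vdash y)\vdash z$; $(x\vdash y)\vdash z=x\vdash(y\vdash z)$. Two such dialgebras are isomorphic if there is an invertible linear map $f$ with $f(x\dashv y)=f(x)\dashv' f(y)$ and $f(x\vdash y)=f(x)\vdash' f(y)$ for all $x,y$. For $\dim V=2$ with fixed basis $(e_1,e_2)$, a $2\times4$ matrix $\begin{pmatrix}\alpha_1&\alpha_2&\alpha_3&\alpha_4\\ \beta_1&\beta_2&\beta_3&\beta_4\end{pmatrix}$ encodes a bilinear product $\ast$ by $e_1\ast e_1=\alpha_1e_1+\beta_1e_2$, $e_1\ast e_2=\alpha_2e_1+\beta_2e_2$, $e_2\ast e_1=\alpha_3e_1+\beta_3e_2$, $e_2\ast e_2=\alpha_4e_1+\beta_4e_2$. A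 pair $\{A,B\}$ denotes the dialgebra whose product $\dashv$ is encoded by $A$ and whose product $\vdash$ is encoded by $B$. Entries such as $\frac12$ denote the corresponding elements of $\mathbb{F}$. *)

theory Defs
  imports Main
begin

text \<open>A 2-dimensional algebra over a field is modelled on the coordinate space
  F x F with the fixed basis e1 = (1,0), e2 = (0,1).  A bilinear product is encoded
  by its 2x4 structure matrix: row alpha = (a1,a2,a3,a4), row beta = (b1,b2,b3,b4).\<close>

datatype 'a tbl = Tbl 'a 'a 'a 'a 'a 'a 'a 'a
  (* Tbl a1 a2 a3 a4 b1 b2 b3 b4 *)

fun prod_of :: "'a::field tbl \<Rightarrow> 'a \<times> 'a \<Rightarrow> 'a \<times> 'a \<Rightarrow> 'a \<times> 'a" where
  "prod_of (Tbl a1 a2 a3 a4 b1 b2 b3 b4) (x1, x2) (y1, y2) =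
     (x1*y1*a1 + x1*y2*a2 + x2*y1*a3 + x2*y2*a4,
      x1*y1*b1 + x1*y2*b2 + x2*y1*b3 + x2*y2*b4)"

text \<open>The dialgebra {A,B}: left product encoded by A, right product by B.\<close>
definition diassoc :: "'a::field tbl \<Rightarrow> 'a tbl \<Rightarrow> bool" where
  "diassoc A B \<longleftrightarrow> (\<forall>x y z.
     (let L = prod_of A; R = prod_of B in
        L (L x y) z = L x (L y z) \<and>
        L x (L y z) = L x (R y z) \<and>
        L (R x y) z = R x (L y z) \<and>
        R (L x y) z = R (R x y) z \<and>
        R (R x y) z = R x (R y z)))"

fun linmap :: "'a::field \<Rightarrow> 'a \<Rightarrow> 'a \<Rightarrow> 'a \<Rightarrow> 'a \<times> 'a \<Rightarrow> 'a \<times> 'a" where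
  "linmap p q r s (x1, x2) = (p*x1 + q*x2, r*x1 + s*x2)"

definition dialg_iso :: "'a::field tbl \<times> 'a tbl \<Rightarrow> 'a tbl \<times> 'a tbl \<Rightarrow> bool" where
  "dialg_iso D D' \<longleftrightarrow> (\<exists>p q r s. p*s - q*r \<noteq> 0 \<and>
     (\<forall>x y. linmap p q r s (prod_of (fst D) x y) = prod_of (fst D') (linmap p q r s x) (linmap p q r s y)
          \<and> linmap p q r s (prod_of (snd D) x y) = prod_of (snd D') (linmap p q r s x) (linmap p q r s y)))"

fun item :: "nat \<Rightarrow> 'a::field \<Rightarrow> 'a tbl \<times> 'a tbl" where
  "item (Suc 0) t = (Tbl 0 0 0 0 1 0 0 0, Tbl 0 0 0 0 t 0 0 0)"
| "item (Suc (Suc 0)) t = (Tbl 1 0 0 0 0 0 0 0, Tbl 1 0 0 0 0 0 0 0)"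
| "item (Suc (Suc (Suc 0))) t = (Tbl 1 0 0 0 0 0 0 0, Tbl 1 0 0 0 0 1 0 0)"
| "item (Suc (Suc (Suc (Suc 0)))) t = (Tbl 1 0 0 0 0 1 0 0, Tbl 1 0 0 0 0 1 0 0)"
| "item (Suc (Suc (Suc (Suc (Suc 0))))) t =
     (Tbl (1/2) 0 0 0 0 0 (1/2) 0, Tbl (1/2) 0 0 0 t 0 0 0)"
| "item (Suc (Suc (Suc (Suc (Suc (Suc 0)))))) t =
     (Tbl (1/2) 0 0 0 0 0 (1/2) 0, Tbl (1/2) 0 0 0 0 (1/2) 0 0)"
| "item (Suc (Suc (Suc (Suc (Suc (Suc (Suc 0))))))) t =
     (Tbl (1/2) 0 0 0 0 0 (1/2) 0, Tbl (1/2) 0 0 0 0 0 (1/2) 0)"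
| "item (Suc (Suc (Suc (Suc (Suc (Suc (Suc (Suc 0)))))))) t =
     (Tbl (1/2) 0 0 t 0 (1/2) (1/2) 0, Tbl (1/2) 0 0 t 0 (1/2) (1/2) 0)"
| "item _ t = (Tbl 0 0 0 0 0 0 0 0, Tbl 0 0 0 0 0 0 0 0)"

end

theory Submission
  imports Defs
begin


definition dt :: "'a::field \<times> 'a \<Rightarrow> 'a \<times> 'a \<Rightarrow> 'a" where
  "dt u w = fst u * snd w - snd u * fst w"

definition cf :: "'a::field \<times> 'a \<Rightarrow> 'a \<times> 'a \<Rightarrow> 'a \<times> 'a \<Rightarrow> 'a \<times> 'a" where
  "cf u w = linmap (snd w / dt u w) (- fst w / dt u w) (- snd u / dt u w) (fst u / dt u w)"

definition lc :: "'a::field \<Rightarrow> 'a \<times> 'a \<Rightarrow> 'a \<Rightarrow> 'a \<times> 'a \<Rightarrow> 'a \<times> 'a" where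
  "lc a u b w = (a * fst u + b * fst w, a * snd u + b * snd w)"

definition tr :: "'a::field \<times> 'a \<Rightarrow> 'a \<times> 'a \<Rightarrow> 'a tbl \<Rightarrow> 'a tbl" where
  "tr u w T = (let P = prod_of T; f = cf u w; c11 = f (P u u); c12 = f (P u w);
      c21 = f (P w u); c22 = f (P w w) in
      Tbl (fst c11) (fst c12) (fst c21) (fst c22) (snd c11) (snd c12) (snd c21) (snd c22))"

lemma linmap_lc: "linmap p q r s (lc a x b y) = lc a (linmap p q r s x) b (linmap p q r s y)"
  by (cases x; cases y) (simp add: lc_def algebra_simps)

lemma prod_lc_l: "prod_of T (lc a x b y) z = lc a (prod_of T x z) b (prod_of T y z)"
  by (cases T; cases x; cases y; cases z) (simp add: lc_def algebra_simps)

lemma prod_lc_r: "prod_of T z (lc a x b y) = lc a (prod_of T z x) b (prod_of T z y)"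
  by (cases T; cases x; cases y; cases z) (simp add: lc_def algebra_simps)

lemma cf_lc: assumes "dt u w \<noteq> 0" shows "cf u w (lc a u b w) = (a, b)"
proof -
  obtain u1 u2 where u: "u = (u1,u2)" by (cases u)
  obtain w1 w2 where w: "w = (w1,w2)" by (cases w)
  have e: "dt u w = u1*w2 - u2*w1" using u w by (simp add: dt_def)
  show ?thesis using assms unfolding u w by (simp add: cf_def lc_def field_simps) (simp add: dt_def algebra_simps)
qed

lemma expand: assumes "dt u w \<noteq> 0" shows "x = lc (fst (cf u w x)) u (snd (cf u w x)) w"
proof -
  obtain u1 u2 where u: "u = (u1,u2)" by (cases u)
  obtain w1 w2 where w: "w = (w1,w2)" by (cases w)
  obtain x1 x2 where x: "x = (x1,x2)" by (cases x)
  have e: "dt u w = u1*w2 - u2*w1" using u w by (simp add: dt_def)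
  show ?thesis using assms unfolding u w x by (simp add: cf_def lc_def field_simps) (simp add: dt_def algebra_simps)
qed

lemma tr_prod:
  assumes d: "dt u w \<noteq> 0"
  shows "cf u w (prod_of T x y) = prod_of (tr u w T) (cf u w x) (cf u w y)"
proof -
  obtain a b where ab: "cf u w x = (a,b)" by (cases "cf u w x")
  obtain c e where ce: "cf u w y = (c,e)" by (cases "cf u w y")
  have x: "x = lc a u b w" using expand[OF d, of x] ab by simp
  have y: "y = lc c u e w" using expand[OF d, of y] ce by simp
  obtain p1 p2 where P11: "cf u w (prod_of T u u) = (p1,p2)" by (cases "cf u w (prod_of T u u)")
  obtain q1 q2 where P12: "cf u w (prod_of T u w) = (q1,q2)" by (cases "cf u w (prod_of T u w)")
  obtain r1 r2 where P21: "cf u w (prod_of T w u) = (r1,r2)" by (cases "cf u w (prod_of T w u)")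
  obtain s1 s2 where P22: "cf u w (prod_of T w w) = (s1,s2)" by (cases "cf u w (prod_of T w w)")
  have "cf u w (prod_of T x y) = lc a (lc c (cf u w (prod_of T u u)) e (cf u w (prod_of T u w)))
      b (lc c (cf u w (prod_of T w u)) e (cf u w (prod_of T w w)))"
    unfolding x y prod_lc_l prod_lc_r unfolding cf_def linmap_lc by (simp add: lc_def algebra_simps)
  then show ?thesis unfolding ab ce P11 P12 P21 P22
    by (simp add: tr_def Let_def lc_def P11 P12 P21 P22 algebra_simps)
qed

lemma linmap_comp: "linmap p q r s (linmap p' q' r' s' x) =
   linmap (p*p'+q*r') (p*q'+q*s') (r*p'+s*r') (r*q'+s*s') x"
  by (cases x) (simp add: algebra_simps)

lemma linmap_inv: assumes "p*s - q*r \<noteq> 0"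
  shows "linmap (s/(p*s-q*r)) (-q/(p*s-q*r)) (-r/(p*s-q*r)) (p/(p*s-q*r)) (linmap p q r s x) = x"
proof -
  obtain x1 x2 where x: "x = (x1,x2)" by (cases x)
  obtain D where D: "D = p*s - q*r" by simp
  have "D \<noteq> 0" using assms D by simp
  then show ?thesis unfolding D[symmetric] x by (simp add: field_simps) (simp add: D algebra_simps)
qed

lemma linmap_inv2: assumes "p*s - q*r \<noteq> 0"
  shows "linmap p q r s (linmap (s/(p*s-q*r)) (-q/(p*s-q*r)) (-r/(p*s-q*r)) (p/(p*s-q*r)) x) = x"
proof -
  obtain x1 x2 where x: "x = (x1,x2)" by (cases x)
  obtain D where D: "D = p*s - q*r" by simp
  have "D \<noteq> 0" using assms D by simp
  then show ?thesis unfolding D[symmetric] x by (simp add: field_simps) (simp add: D algebra_simps)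
qed

lemma iso_tr: assumes d: "dt u w \<noteq> 0" shows "dialg_iso (A,B) (tr u w A, tr u w B)"
proof -
  obtain u1 u2 where u: "u = (u1,u2)" by (cases u)
  obtain w1 w2 where w: "w = (w1,w2)" by (cases w)
  have "(snd w / dt u w) * (fst u / dt u w) - (- fst w / dt u w) * (- snd u / dt u w) \<noteq> 0"
    using d unfolding u w by (simp add: field_simps) (simp add: dt_def algebra_simps)
  then show ?thesis unfolding dialg_iso_def using tr_prod[OF d] unfolding cf_def fst_conv snd_conv by blast
qed

definition hom where "hom f A B A' B' \<longleftrightarrow> (\<forall>x y. f (prod_of A x y) = prod_of A' (f x) (f y)
   \<and> f (prod_of B x y) = prod_of B' (f x) (f y))"

lemma iso_fg: assumes "dialg_iso (A,B) (A',B')"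
  shows "\<exists>f g. hom f A B A' B' \<and> (\<forall>x. g (f x) = x) \<and> (\<forall>x. f (g x) = x) \<and> f (0,0) = (0,0) \<and> g (0,0) = (0,0)"
proof -
  obtain p q r s where d: "p*s-q*r \<noteq> 0" and h: "\<forall>x y. linmap p q r s (prod_of A x y) = prod_of A' (linmap p q r s x) (linmap p q r s y)
          \<and> linmap p q r s (prod_of B x y) = prod_of B' (linmap p q r s x) (linmap p q r s y)"
    using assms unfolding dialg_iso_def by auto
  show ?thesis
    apply (rule exI[of _ "linmap p q r s"])
    apply (rule exI[of _ "linmap (s/(p*s-q*r)) (-q/(p*s-q*r)) (-r/(p*s-q*r)) (p/(p*s-q*r))"])
    using h linmap_inv[OF d] linmap_inv2[OF d] unfolding hom_def by simp
qed

lemma iso_trans: assumes "dialg_iso D1 D2" "dialg_iso D2 D3" shows "dialg_iso D1 D3"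
proof -
  obtain p q r s where d: "p*s-q*r \<noteq> 0" and h: "\<forall>x y. linmap p q r s (prod_of (fst D1) x y) = prod_of (fst D2) (linmap p q r s x) (linmap p q r s y)
          \<and> linmap p q r s (prod_of (snd D1) x y) = prod_of (snd D2) (linmap p q r s x) (linmap p q r s y)"
    using assms(1) unfolding dialg_iso_def by auto
  obtain p' q' r' s' where d': "p'*s'-q'*r' \<noteq> 0" and h': "\<forall>x y. linmap p' q' r' s' (prod_of (fst D2) x y) = prod_of (fst D3) (linmap p' q' r' s' x) (linmap p' q' r' s' y)
          \<and> linmap p' q' r' s' (prod_of (snd D2) x y) = prod_of (snd D3) (linmap p' q' r' s' x) (linmap p' q' r' s' y)"
    using assms(2) unfolding dialg_iso_def by auto
  have "(p'*p+q'*r) * (r'*q+s'*s) - (p'*q+q'*s) * (r'*p+s'*r) = (p'*s'-q'*r') * (p*s-q*r)"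
    by (simp add: algebra_simps)
  then have dd: "(p'*p+q'*r) * (r'*q+s'*s) - (p'*q+q'*s) * (r'*p+s'*r) \<noteq> 0" using d d' by simp
  show ?thesis unfolding dialg_iso_def
    apply (rule exI[of _ "p'*p+q'*r"], rule exI[of _ "p'*q+q'*s"], rule exI[of _ "r'*p+s'*r"], rule exI[of _ "r'*q+s'*s"])
    using dd h h' by (simp add: linmap_comp[symmetric])
qed

lemma diassoc_transfer: assumes "dialg_iso (A,B) (A',B')" "diassoc A B" shows "diassoc A' B'"
proof -
  obtain f g where h: "hom f A B A' B'" and gf: "\<forall>x. g (f x) = x" and fg: "\<forall>x. f (g x) = x"
    using iso_fg[OF assms(1)] by blast
  have L: "prod_of A' a b = f (prod_of A (g a) (g b))" for a b using h fg unfolding hom_def by metis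
  have R: "prod_of B' a b = f (prod_of B (g a) (g b))" for a b using h fg unfolding hom_def by metis
  show ?thesis unfolding diassoc_def Let_def L R
  proof (intro allI)
    fix x y z
    show "f (prod_of A (g (f (prod_of A (g x) (g y)))) (g z)) = f (prod_of A (g x) (g (f (prod_of A (g y) (g z))))) \<and>
         f (prod_of A (g x) (g (f (prod_of A (g y) (g z))))) = f (prod_of A (g x) (g (f (prod_of B (g y) (g z))))) \<and>
         f (prod_of A (g (f (prod_of B (g x) (g y)))) (g z)) = f (prod_of B (g x) (g (f (prod_of A (g y) (g z))))) \<and>
         f (prod_of B (g (f (prod_of A (g x) (g y)))) (g z)) = f (prod_of B (g (f (prod_of B (g x) (g y)))) (g z)) \<and>
         f (prod_of B (g (f (prod_of B (g x) (g y)))) (g z)) = f (prod_of B (g x) (g (f (prod_of B (g y) (g z)))))"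
      using assms(2)[unfolded diassoc_def Let_def, rule_format, of "g x" "g y" "g z"] by (simp add: gf)
  qed
qed

lemma nz_transfer: assumes "dialg_iso (A,B) (A',B')" "\<exists>x y. prod_of A x y \<noteq> (0,0)"
  shows "\<exists>x y. prod_of A' x y \<noteq> (0,0)"
proof -
  obtain f g where h: "hom f A B A' B'" and gf: "\<forall>x. g (f x) = x" and fg: "\<forall>x. f (g x) = x"
     and f0: "f (0,0) = (0,0)" using iso_fg[OF assms(1)] by blast
  obtain x y where "prod_of A x y \<noteq> (0,0)" using assms(2) by blast
  then have "f (prod_of A x y) \<noteq> (0,0)" using gf f0 by metis
  then show ?thesis using h unfolding hom_def by metis
qed



lemma it1: "item 1 t = (Tbl 0 0 0 0 1 0 0 0, Tbl 0 0 0 0 t 0 0 0)" by (simp add: eval_nat_numeral)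
lemma it2: "item 2 t = (Tbl 1 0 0 0 0 0 0 0, Tbl 1 0 0 0 0 0 0 0)" by (simp add: eval_nat_numeral)
lemma it3: "item 3 t = (Tbl 1 0 0 0 0 0 0 0, Tbl 1 0 0 0 0 1 0 0)" by (simp add: eval_nat_numeral)
lemma it4: "item 4 t = (Tbl 1 0 0 0 0 1 0 0, Tbl 1 0 0 0 0 1 0 0)" by (simp add: eval_nat_numeral)
lemma it5: "item 5 t = (Tbl (1/2) 0 0 0 0 0 (1/2) 0, Tbl (1/2) 0 0 0 t 0 0 0)" by (simp add: eval_nat_numeral)
lemma it6: "item 6 t = (Tbl (1/2) 0 0 0 0 0 (1/2) 0, Tbl (1/2) 0 0 0 0 (1/2) 0 0)" by (simp add: eval_nat_numeral)
lemma it7: "item 7 t = (Tbl (1/2) 0 0 0 0 0 (1/2) 0, Tbl (1/2) 0 0 0 0 0 (1/2) 0)" by (simp add: eval_nat_numeral)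
lemma it8: "item 8 t = (Tbl (1/2) 0 0 t 0 (1/2) (1/2) 0, Tbl (1/2) 0 0 t 0 (1/2) (1/2) 0)" by (simp add: eval_nat_numeral)

definition "I1 A \<longleftrightarrow> (\<exists>x. x \<noteq> (0,0) \<and> prod_of A x x = x)"
definition "I2 A \<longleftrightarrow> (\<exists>u. \<forall>x. prod_of A u x = x)"
definition "I3 A \<longleftrightarrow> (\<exists>u. \<forall>x. prod_of A x u = x)"
definition "I4 A B \<longleftrightarrow> (\<forall>x y. prod_of A x y = prod_of B x y)"

lemma inv_all: assumes "dialg_iso (A,B) (A',B')"
  shows "(I1 A \<longleftrightarrow> I1 A') \<and> (I2 A \<longleftrightarrow> I2 A') \<and> (I3 A \<longleftrightarrow> I3 A') \<and> (I4 A B \<longleftrightarrow> I4 A' B')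
     \<and> (I2 B \<longleftrightarrow> I2 B')"
proof -
  obtain f g where h: "hom f A B A' B'" and gf: "\<And>x. g (f x) = x" and fg: "\<And>x. f (g x) = x"
     and f0: "f (0,0) = (0,0)" and g0: "g (0,0) = (0,0)" using iso_fg[OF assms(1)] by blast
  have hA: "\<And>x y. f (prod_of A x y) = prod_of A' (f x) (f y)" using h unfolding hom_def by blast
  have hB: "\<And>x y. f (prod_of B x y) = prod_of B' (f x) (f y)" using h unfolding hom_def by blast
  have LA: "prod_of A' a b = f (prod_of A (g a) (g b))" for a b by (metis hA fg)
  have LB: "prod_of B' a b = f (prod_of B (g a) (g b))" for a b by (metis hB fg)
  have inj: "f a = f b \<longleftrightarrow> a = b" for a b by (metis gf)
  have 1: "I1 A \<longleftrightarrow> I1 A'" unfolding I1_def LA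
    by (metis gf fg f0 g0)
  have 2: "I2 A \<longleftrightarrow> I2 A'" unfolding I2_def LA
    by (metis gf fg)
  have 3: "I3 A \<longleftrightarrow> I3 A'" unfolding I3_def LA
    by (metis gf fg)
  have 4: "I4 A B \<longleftrightarrow> I4 A' B'" unfolding I4_def LA LB
    by (metis gf fg)
  have 5: "I2 B \<longleftrightarrow> I2 B'" unfolding I2_def LB
    by (metis gf fg)
  show ?thesis using 1 2 3 4 5 by blast
qed

lemma v1: "\<not> I1 (Tbl 0 0 0 0 1 0 0 (0::'a::field))"
proof
  assume "I1 (Tbl 0 0 0 0 1 0 0 (0::'a::field))"
  then obtain a b :: 'a where "(a,b) \<noteq> (0,0)" "prod_of (Tbl 0 0 0 0 1 0 0 0) (a,b) (a,b) = (a,b)" unfolding I1_def by auto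
  then show False by auto
qed

lemma v2: "\<not> I2 (Tbl 0 0 0 0 1 0 0 (0::'a::field))"
proof
  assume "I2 (Tbl 0 0 0 0 1 0 0 (0::'a::field))"
  then obtain u where h: "\<forall>x. prod_of (Tbl 0 0 0 0 1 0 0 (0::'a::field)) u x = x" unfolding I2_def by blast
  from h[rule_format, of "(1,0)"] show False by (cases u) simp
qed

lemma v3: "\<not> I3 (Tbl 0 0 0 0 1 0 0 (0::'a::field))"
proof
  assume "I3 (Tbl 0 0 0 0 1 0 0 (0::'a::field))"
  then obtain u where h: "\<forall>x. prod_of (Tbl 0 0 0 0 1 0 0 (0::'a::field)) x u = x" unfolding I3_def by blast
  from h[rule_format, of "(1,0)"] show False by (cases u) simp
qed

lemma v4: "I1 (Tbl 1 0 0 0 0 0 0 (0::'a::field))"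
  unfolding I1_def by (rule exI[of _ "(1,0)"]) (simp)

lemma v5: "\<not> I2 (Tbl 1 0 0 0 0 0 0 (0::'a::field))"
proof
  assume "I2 (Tbl 1 0 0 0 0 0 0 (0::'a::field))"
  then obtain u where h: "\<forall>x. prod_of (Tbl 1 0 0 0 0 0 0 (0::'a::field)) u x = x" unfolding I2_def by blast
  from h[rule_format, of "(0,1)"] show False by (cases u) simp
qed

lemma v6: "\<not> I3 (Tbl 1 0 0 0 0 0 0 (0::'a::field))"
proof
  assume "I3 (Tbl 1 0 0 0 0 0 0 (0::'a::field))"
  then obtain u where h: "\<forall>x. prod_of (Tbl 1 0 0 0 0 0 0 (0::'a::field)) x u = x" unfolding I3_def by blast
  from h[rule_format, of "(0,1)"] show False by (cases u) simp
qed

lemma v7: "I1 (Tbl 1 0 0 0 0 1 0 (0::'a::field))"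
  unfolding I1_def by (rule exI[of _ "(1,0)"]) (simp)

lemma v8: "I2 (Tbl 1 0 0 0 0 1 0 (0::'a::field))"
  unfolding I2_def by (rule exI[of _ "(1,0)"]) (simp)

lemma v9: "\<not> I3 (Tbl 1 0 0 0 0 1 0 (0::'a::field))"
proof
  assume "I3 (Tbl 1 0 0 0 0 1 0 (0::'a::field))"
  then obtain u where h: "\<forall>x. prod_of (Tbl 1 0 0 0 0 1 0 (0::'a::field)) x u = x" unfolding I3_def by blast
  from h[rule_format, of "(0,1)"] show False by (cases u) simp
qed

lemma v10: assumes "(2::'a::field) \<noteq> 0" shows "I1 (Tbl (1/2) 0 0 0 0 0 (1/2) (0::'a))"
  unfolding I1_def by (rule exI[of _ "(2,0)"]) (use assms in simp)

lemma v11: "\<not> I2 (Tbl (1/2) 0 0 0 0 0 (1/2) (0::'a::field))"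
proof
  assume "I2 (Tbl (1/2) 0 0 0 0 0 (1/2) (0::'a::field))"
  then obtain u where h: "\<forall>x. prod_of (Tbl (1/2) 0 0 0 0 0 (1/2) (0::'a::field)) u x = x" unfolding I2_def by blast
  from h[rule_format, of "(0,1)"] show False by (cases u) simp
qed

lemma v12: assumes "(2::'a::field) \<noteq> 0" shows "I3 (Tbl (1/2) 0 0 0 0 0 (1/2) (0::'a))"
  unfolding I3_def by (rule exI[of _ "(2,0)"]) (use assms in simp)

lemma v13: assumes "(2::'a::field) \<noteq> 0" shows "I1 (Tbl (1/2) 0 0 t 0 (1/2) (1/2) (0::'a))"
  unfolding I1_def by (rule exI[of _ "(2,0)"]) (use assms in simp)

lemma v14: assumes "(2::'a::field) \<noteq> 0" shows "I2 (Tbl (1/2) 0 0 t 0 (1/2) (1/2) (0::'a))"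
  unfolding I2_def by (rule exI[of _ "(2,0)"]) (use assms in simp)

lemma v15: assumes "(2::'a::field) \<noteq> 0" shows "I3 (Tbl (1/2) 0 0 t 0 (1/2) (1/2) (0::'a))"
  unfolding I3_def by (rule exI[of _ "(2,0)"]) (use assms in simp)

lemma v16: "\<not> I2 (Tbl 0 0 0 0 t 0 0 (0::'a::field))"
proof
  assume "I2 (Tbl 0 0 0 0 t 0 0 (0::'a::field))"
  then obtain u where h: "\<forall>x. prod_of (Tbl 0 0 0 0 t 0 0 (0::'a::field)) u x = x" unfolding I2_def by blast
  from h[rule_format, of "(1,0)"] show False by (cases u) simp
qed

lemma v17: "\<not> I2 (Tbl (1/2) 0 0 0 t 0 0 (0::'a::field))"
proof
  assume "I2 (Tbl (1/2) 0 0 0 t 0 0 (0::'a::field))"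
  then obtain u where h: "\<forall>x. prod_of (Tbl (1/2) 0 0 0 t 0 0 (0::'a::field)) u x = x" unfolding I2_def by blast
  from h[rule_format, of "(0,1)"] show False by (cases u) simp
qed

lemma v18: assumes "(2::'a::field) \<noteq> 0" shows "I2 (Tbl (1/2) 0 0 0 0 (1/2) 0 (0::'a))"
  unfolding I2_def by (rule exI[of _ "(2,0)"]) (use assms in simp)

lemma v19: "\<not> I4 (Tbl 1 0 0 0 0 0 0 0) (Tbl 1 0 0 0 0 1 0 (0::'a::field))"
proof
  assume "I4 (Tbl 1 0 0 0 0 0 0 0) (Tbl 1 0 0 0 0 1 0 (0::'a::field))"
  from this[unfolded I4_def, rule_format, of "(1,0)" "(0,1)"] show False by simp
qed

lemma v20: assumes "(2::'a::field) \<noteq> 0" shows "\<not> I4 (Tbl (1/2) 0 0 0 0 0 (1/2) 0) (Tbl (1/2) 0 0 0 t 0 0 (0::'a::field))"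
proof
  assume "I4 (Tbl (1/2) 0 0 0 0 0 (1/2) 0) (Tbl (1/2) 0 0 0 t 0 0 (0::'a::field))"
  from this[unfolded I4_def, rule_format, of "(0,1)" "(1,0)"] show False using assms by simp
qed

lemma v21: assumes "(2::'a::field) \<noteq> 0" shows "\<not> I4 (Tbl (1/2) 0 0 0 0 0 (1/2) 0) (Tbl (1/2) 0 0 0 0 (1/2) 0 (0::'a::field))"
proof
  assume "I4 (Tbl (1/2) 0 0 0 0 0 (1/2) 0) (Tbl (1/2) 0 0 0 0 (1/2) 0 (0::'a::field))"
  from this[unfolded I4_def, rule_format, of "(0,1)" "(1,0)"] show False using assms by simp
qed

lemma v22: "I4 A A" unfolding I4_def by simp



lemma s1: "item 1 t = (A,B) \<Longrightarrow> \<not> I1 A \<and> \<not> I2 A \<and> \<not> I3 A \<and> \<not> I2 B"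
  using v1 v2 v3 v16 by (auto simp: it1)
lemma s2: "item 2 t = (A,B) \<Longrightarrow> I1 A \<and> \<not> I2 A \<and> \<not> I3 A \<and> I4 A B \<and> \<not> I2 B"
  using v4 v5 v6 v22 by (auto simp: it2)
lemma s3: "item 3 t = (A,B) \<Longrightarrow> I1 A \<and> \<not> I2 A \<and> \<not> I3 A \<and> \<not> I4 A B \<and> I2 B"
  using v4 v5 v6 v19 v8 by (auto simp: it3)
lemma s4: "item 4 t = (A,B) \<Longrightarrow> I1 A \<and> I2 A \<and> \<not> I3 A \<and> I4 A B \<and> I2 B"
  using v7 v8 v9 v22 by (auto simp: it4)
context fixes two assumes two: "(2::'a::field) \<noteq> 0" begin
lemma s5: "item 5 (t::'a) = (A,B) \<Longrightarrow> I1 A \<and> \<not> I2 A \<and> I3 A \<and> \<not> I4 A B \<and> \<not> I2 B"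
  using v10[OF two] v11 v12[OF two] v20[OF two] v17 by (auto simp: it5)
lemma s6: "item 6 (t::'a) = (A,B) \<Longrightarrow> I1 A \<and> \<not> I2 A \<and> I3 A \<and> \<not> I4 A B \<and> I2 B"
  using v10[OF two] v11 v12[OF two] v21[OF two] v18[OF two] by (auto simp: it6)
lemma s7: "item 7 (t::'a) = (A,B) \<Longrightarrow> I1 A \<and> \<not> I2 A \<and> I3 A \<and> I4 A B \<and> \<not> I2 B"
  using v10[OF two] v11 v12[OF two] v22 by (auto simp: it7)
lemma s8: "item 8 (t::'a) = (A,B) \<Longrightarrow> I1 A \<and> I2 A \<and> I3 A \<and> I4 A B \<and> I2 B"
  using v13[OF two] v14[OF two] v15[OF two] v22 by (auto simp: it8)
end


lemma sig: assumes two: "(2::'a::field) \<noteq> 0" and ab: "item i (t::'a) = (A,B)" shows "(i = 1 \<longrightarrow> \<not> I1 A \<and> \<not> I2 A \<and> \<not> I3 A \<and> \<not> I2 B) \<and>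
    (i = 2 \<longrightarrow> I1 A \<and> \<not> I2 A \<and> \<not> I3 A \<and> I4 A B \<and> \<not> I2 B) \<and>
    (i = 3 \<longrightarrow> I1 A \<and> \<not> I2 A \<and> \<not> I3 A \<and> \<not> I4 A B \<and> I2 B) \<and>
    (i = 4 \<longrightarrow> I1 A \<and> I2 A \<and> \<not> I3 A \<and> I4 A B \<and> I2 B) \<and>
    (i = 5 \<longrightarrow> I1 A \<and> \<not> I2 A \<and> I3 A \<and> \<not> I4 A B \<and> \<not> I2 B) \<and>
    (i = 6 \<longrightarrow> I1 A \<and> \<not> I2 A \<and> I3 A \<and> \<not> I4 A B \<and> I2 B) \<and>
    (i = 7 \<longrightarrow> I1 A \<and> \<not> I2 A \<and> I3 A \<and> I4 A B \<and> \<not> I2 B) \<and>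
    (i = 8 \<longrightarrow> I1 A \<and> I2 A \<and> I3 A \<and> I4 A B \<and> I2 B)"
  using ab s1[of t A B] s2[of t A B] s3[of t A B] s4[of t A B] s5[OF two, of t A B] s6[OF two, of t A B] s7[OF two, of t A B] s8[OF two, of t A B] by auto

lemma part2:
  assumes two: "(2::'a::field) \<noteq> 0" and i: "i \<in> {1..8::nat}" and j: "j \<in> {1..8::nat}" and ij: "i \<noteq> j"
  shows "\<not> dialg_iso (item i (t::'a)) (item j s)"
proof
  assume iso: "dialg_iso (item i t) (item j s)"
  obtain A B where ab: "item i t = (A,B)" by (cases "item i t")
  obtain A' B' where ab': "item j s = (A',B')" by (cases "item j s")
  have h: "(I1 A \<longleftrightarrow> I1 A') \<and> (I2 A \<longleftrightarrow> I2 A') \<and> (I3 A \<longleftrightarrow> I3 A') \<and> (I4 A B \<longleftrightarrow> I4 A' B')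
     \<and> (I2 B \<longleftrightarrow> I2 B')" using inv_all iso ab ab' by metis
  have ii: "i = 1 \<or> i = 2 \<or> i = 3 \<or> i = 4 \<or> i = 5 \<or> i = 6 \<or> i = 7 \<or> i = 8" using i by auto
  have jj: "j = 1 \<or> j = 2 \<or> j = 3 \<or> j = 4 \<or> j = 5 \<or> j = 6 \<or> j = 7 \<or> j = 8" using j by auto
  have si: "(i = 1 \<longrightarrow> \<not> I1 A \<and> \<not> I2 A \<and> \<not> I3 A \<and> \<not> I2 B) \<and>
    (i = 2 \<longrightarrow> I1 A \<and> \<not> I2 A \<and> \<not> I3 A \<and> I4 A B \<and> \<not> I2 B) \<and>
    (i = 3 \<longrightarrow> I1 A \<and> \<not> I2 A \<and> \<not> I3 A \<and> \<not> I4 A B \<and> I2 B) \<and>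
    (i = 4 \<longrightarrow> I1 A \<and> I2 A \<and> \<not> I3 A \<and> I4 A B \<and> I2 B) \<and>
    (i = 5 \<longrightarrow> I1 A \<and> \<not> I2 A \<and> I3 A \<and> \<not> I4 A B \<and> \<not> I2 B) \<and>
    (i = 6 \<longrightarrow> I1 A \<and> \<not> I2 A \<and> I3 A \<and> \<not> I4 A B \<and> I2 B) \<and>
    (i = 7 \<longrightarrow> I1 A \<and> \<not> I2 A \<and> I3 A \<and> I4 A B \<and> \<not> I2 B) \<and>
    (i = 8 \<longrightarrow> I1 A \<and> I2 A \<and> I3 A \<and> I4 A B \<and> I2 B)" by (rule sig[OF two ab])
  have sj: "(j = 1 \<longrightarrow> \<not> I1 A' \<and> \<not> I2 A' \<and> \<not> I3 A' \<and> \<not> I2 B') \<and>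
    (j = 2 \<longrightarrow> I1 A' \<and> \<not> I2 A' \<and> \<not> I3 A' \<and> I4 A' B' \<and> \<not> I2 B') \<and>
    (j = 3 \<longrightarrow> I1 A' \<and> \<not> I2 A' \<and> \<not> I3 A' \<and> \<not> I4 A' B' \<and> I2 B') \<and>
    (j = 4 \<longrightarrow> I1 A' \<and> I2 A' \<and> \<not> I3 A' \<and> I4 A' B' \<and> I2 B') \<and>
    (j = 5 \<longrightarrow> I1 A' \<and> \<not> I2 A' \<and> I3 A' \<and> \<not> I4 A' B' \<and> \<not> I2 B') \<and>
    (j = 6 \<longrightarrow> I1 A' \<and> \<not> I2 A' \<and> I3 A' \<and> \<not> I4 A' B' \<and> I2 B') \<and>
    (j = 7 \<longrightarrow> I1 A' \<and> \<not> I2 A' \<and> I3 A' \<and> I4 A' B' \<and> \<not> I2 B') \<and>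
    (j = 8 \<longrightarrow> I1 A' \<and> I2 A' \<and> I3 A' \<and> I4 A' B' \<and> I2 B')"
    by (rule sig[OF two ab'])
  from ii jj ij h si sj show False by auto
qed



lemma bit0_nz: assumes "(2::'a::field) \<noteq> 0"
  shows "(numeral (Num.Bit0 k) = (0::'a)) \<longleftrightarrow> (numeral k = (0::'a))"
proof -
  have h: "(numeral (Num.Bit0 k)::'a) = 2 * numeral k" by (subst mult_2) (rule numeral_Bit0)
  have "(2 * numeral k = (0::'a)) \<longleftrightarrow> (numeral k = (0::'a))" using assms by (simp only: mult_eq_0_iff) blast
  then show ?thesis by (subst h)
qed

definition "G A B \<longleftrightarrow> (\<exists>i\<in>{1..8::nat}. \<exists>t. dialg_iso (A,B) (item i t))"

lemma linmap_id: "linmap 1 0 0 1 x = x" by (cases x) simp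

lemma iso_refl: "dialg_iso D D"
  unfolding dialg_iso_def
  apply (rule exI[of _ 1], rule exI[of _ 0], rule exI[of _ 0], rule exI[of _ 1])
  by (simp add: linmap_id)

lemma da: assumes "diassoc A B"
  shows "prod_of A (prod_of A x y) z = prod_of A x (prod_of A y z) \<and>
        prod_of A x (prod_of A y z) = prod_of A x (prod_of B y z) \<and>
        prod_of A (prod_of B x y) z = prod_of B x (prod_of A y z) \<and>
        prod_of B (prod_of A x y) z = prod_of B (prod_of B x y) z \<and>
        prod_of B (prod_of B x y) z = prod_of B x (prod_of B y z)"
  using assms unfolding diassoc_def Let_def by blast

lemma E1: assumes "diassoc (Tbl 0 0 0 0 1 0 0 0) B" shows "G (Tbl 0 0 0 0 1 0 0 (0::'a::field)) B"
proof -
  obtain c1 c2 c3 c4 d1 d2 d3 d4 where B: "B = Tbl c1 c2 c3 c4 d1 d2 d3 (d4::'a)" by (cases B)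
  note h = da[OF assms[unfolded B]]
  have B': "B = Tbl 0 0 0 0 d1 0 0 0"
    using h[of "(1,0)" "(1,0)" "(1,0)"] h[of "(1,0)" "(1,0)" "(0,1)"] h[of "(1,0)" "(0,1)" "(1,0)"] h[of "(1,0)" "(0,1)" "(0,1)"]
      h[of "(0,1)" "(1,0)" "(1,0)"] h[of "(0,1)" "(1,0)" "(0,1)"] h[of "(0,1)" "(0,1)" "(1,0)"] h[of "(0,1)" "(0,1)" "(0,1)"]
    unfolding B by auto
  have "dialg_iso (Tbl 0 0 0 0 1 0 0 0, B) (item 1 d1)" unfolding it1 B' by (rule iso_refl)
  then show ?thesis unfolding G_def by force
qed


lemma idem01: "(x::'a::field) * x = x \<Longrightarrow> x = 0 \<or> x = 1"
  by (metis mult_cancel_right mult_1 )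

lemma idemh: fixes x :: "'a::field" assumes "(2::'a) \<noteq> 0" "x * x = x / 2" shows "x = 0 \<or> x = 1/2"
proof -
  have "x * (2 * x - 1) = (0::'a)" using assms by (simp add: field_simps algebra_simps)
  then show ?thesis using assms by (auto simp: field_simps)
qed

lemma E2: assumes "diassoc (Tbl 1 0 0 0 0 0 0 0) B" shows "G (Tbl 1 0 0 0 0 0 0 (0::'a::field)) B"
proof -
  obtain c1 c2 c3 c4 d1 d2 d3 d4 where B: "B = Tbl c1 c2 c3 c4 d1 d2 d3 (d4::'a)" by (cases B)
  note h = da[OF assms[unfolded B]]
  have B': "B = Tbl 1 0 0 0 0 d2 0 0" and d2: "d2 * d2 = d2"
    using h[of "(1,0)" "(1,0)" "(1,0)"] h[of "(1,0)" "(1,0)" "(0,1)"] h[of "(1,0)" "(0,1)" "(1,0)"] h[of "(1,0)" "(0,1)" "(0,1)"]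
      h[of "(0,1)" "(1,0)" "(1,0)"] h[of "(0,1)" "(1,0)" "(0,1)"] h[of "(0,1)" "(0,1)" "(1,0)"] h[of "(0,1)" "(0,1)" "(0,1)"]
    unfolding B by auto
  from idem01[OF d2] have "B = Tbl 1 0 0 0 0 0 0 0 \<or> B = Tbl 1 0 0 0 0 1 0 0" using B' by auto
  then have "dialg_iso (Tbl 1 0 0 0 0 0 0 0, B) (item 2 0) \<or> dialg_iso (Tbl 1 0 0 0 0 0 0 0, B) (item 3 0)"
    unfolding it2 it3 using iso_refl by auto
  then show ?thesis unfolding G_def by force
qed

lemma E4: assumes "diassoc (Tbl 1 0 0 0 0 1 0 0) B" shows "G (Tbl 1 0 0 0 0 1 0 (0::'a::field)) B"
proof -
  obtain c1 c2 c3 c4 d1 d2 d3 d4 where B: "B = Tbl c1 c2 c3 c4 d1 d2 d3 (d4::'a)" by (cases B)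
  note h = da[OF assms[unfolded B]]
  have B': "B = Tbl 1 0 0 0 0 1 0 0"
    using h[of "(1,0)" "(1,0)" "(1,0)"] h[of "(1,0)" "(1,0)" "(0,1)"] h[of "(1,0)" "(0,1)" "(1,0)"] h[of "(1,0)" "(0,1)" "(0,1)"]
      h[of "(0,1)" "(1,0)" "(1,0)"] h[of "(0,1)" "(1,0)" "(0,1)"] h[of "(0,1)" "(0,1)" "(1,0)"] h[of "(0,1)" "(0,1)" "(0,1)"]
    unfolding B by auto
  have "dialg_iso (Tbl 1 0 0 0 0 1 0 0, B) (item 4 0)" unfolding it4 B' by (rule iso_refl)
  then show ?thesis unfolding G_def by force
qed

lemma E5: assumes two: "(2::'a::field) \<noteq> 0" and "diassoc (Tbl (1/2) 0 0 0 0 0 (1/2) 0) B" shows "G (Tbl (1/2) 0 0 0 0 0 (1/2) (0::'a)) B"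
proof -
  obtain c1 c2 c3 c4 d1 d2 d3 d4 where B: "B = Tbl c1 c2 c3 c4 d1 d2 d3 (d4::'a)" by (cases B)
  note h = da[OF assms(2)[unfolded B]]
  have c0: "c1 * 4 = 2" "c2 = 0" "c3 = 0" "c4 = 0"
    using h[of "(1,0)" "(1,0)" "(1,0)"] h[of "(1,0)" "(1,0)" "(0,1)"] h[of "(1,0)" "(0,1)" "(1,0)"] h[of "(1,0)" "(0,1)" "(0,1)"]
    using two by (simp_all add: bit0_nz[OF two])
  have "2 * (c1 * 2) = 2 * 1" using c0(1) by (simp add: algebra_simps)
  then have "c1 * 2 = 1" using two mult_left_cancel by blast
  then have "c1 = 1/2" using two by (simp add: field_simps)
  note c = this c0(2-4)
  have e1: "d4 * d4 = 0" using h[of "(0,1)" "(0,1)" "(0,1)"] c by simp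
  have e2: "d2 * d3 = 0" using h[of "(1,0)" "(0,1)" "(1,0)"] c by simp
  have e3: "d3 * d3 = d3 / 2" using h[of "(0,1)" "(1,0)" "(1,0)"] c two e1 by (simp add: field_simps)
  have e4: "d1 * d3 = 0" using h[of "(1,0)" "(1,0)" "(1,0)"] c two e1 by (simp add: field_simps)
  have e5: "d2 * d2 = d2 / 2" "d1 * d2 = 0" using h[of "(1,0)" "(1,0)" "(0,1)"] h[of "(1,0)" "(1,0)" "(1,0)"] c two e1 by (auto simp add: field_simps bit0_nz[OF two])
  have B': "B = Tbl (1/2) 0 0 0 d1 d2 d3 0" using B c e1 by simp
  have "B = Tbl (1/2) 0 0 0 d1 0 0 0 \<or> B = Tbl (1/2) 0 0 0 0 (1/2) 0 0 \<or> B = Tbl (1/2) 0 0 0 0 0 (1/2) 0"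
    using idemh[OF two e3] idemh[OF two e5(1)] e2 e4 e5(2) B' two by auto
  then have "dialg_iso (Tbl (1/2) 0 0 0 0 0 (1/2) 0, B) (item 5 d1) \<or> dialg_iso (Tbl (1/2) 0 0 0 0 0 (1/2) 0, B) (item 6 0)
     \<or> dialg_iso (Tbl (1/2) 0 0 0 0 0 (1/2) 0, B) (item 7 0)"
    unfolding it5 it6 it7 using iso_refl by auto
  then show ?thesis unfolding G_def by force
qed

lemma E8: assumes two: "(2::'a::field) \<noteq> 0" and "diassoc (Tbl (1/2) 0 0 c 0 (1/2) (1/2) 0) B" shows "G (Tbl (1/2) 0 0 c 0 (1/2) (1/2) (0::'a)) B"
proof -
  obtain c1 c2 c3 c4 d1 d2 d3 d4 where B: "B = Tbl c1 c2 c3 c4 d1 d2 d3 (d4::'a)" by (cases B)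
  note h = da[OF assms(2)[unfolded B]]
  have B': "B = Tbl (1/2) 0 0 c 0 (1/2) (1/2) 0"
    using h[of "(2,0)" "(1,0)" "(1,0)"] h[of "(2,0)" "(1,0)" "(0,1)"] h[of "(2,0)" "(0,1)" "(1,0)"] h[of "(2,0)" "(0,1)" "(0,1)"]
    unfolding B using two by (auto simp: field_simps)
  have "dialg_iso (Tbl (1/2) 0 0 c 0 (1/2) (1/2) 0, B) (item 8 c)" unfolding it8 B' by (rule iso_refl)
  then show ?thesis unfolding G_def by force
qed


lemma G_trans: assumes "dialg_iso (A,B) (A',B')" "G A' B'" shows "G A B"
  using assms iso_trans unfolding G_def by blast

lemma tr_eq: assumes "dt u w \<noteq> 0" "prod_of T u u = lc n1 u n5 w" "prod_of T u w = lc n2 u n6 w"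
  "prod_of T w u = lc n3 u n7 w" "prod_of T w w = lc n4 u n8 w"
  shows "tr u w T = Tbl n1 n2 n3 n4 n5 n6 n7 n8"
  using assms by (simp add: tr_def Let_def cf_lc)

lemma red: assumes "dt u w \<noteq> 0" "diassoc A B" "prod_of A u u = lc n1 u n5 w" "prod_of A u w = lc n2 u n6 w"
  "prod_of A w u = lc n3 u n7 w" "prod_of A w w = lc n4 u n8 w"
  and E: "\<And>B'. diassoc (Tbl n1 n2 n3 n4 n5 n6 n7 n8) B' \<Longrightarrow> G (Tbl n1 n2 n3 n4 n5 n6 n7 n8) B'"
  shows "G A B"
proof -
  have t: "tr u w A = Tbl n1 n2 n3 n4 n5 n6 n7 n8" using tr_eq assms(1,3-6) by blast
  have i: "dialg_iso (A,B) (Tbl n1 n2 n3 n4 n5 n6 n7 n8, tr u w B)" using iso_tr[OF assms(1), of A B] t by simp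
  have "diassoc (Tbl n1 n2 n3 n4 n5 n6 n7 n8) (tr u w B)" using diassoc_transfer[OF i assms(2)] .
  then show ?thesis using G_trans[OF i] E by blast
qed



lemma M2: assumes two: "(2::'a::field) \<noteq> 0" and h: "diassoc (Tbl 0 al al (al*be) 1 be be (al+be*be)) B"
  shows "G (Tbl 0 al al (al*be) 1 be be (al+be*(be::'a))) B"
proof (cases "al = 0")
  case False
  show ?thesis
  proof (rule red[where u="(-be/(2*al), 1/(2*al))" and w="(1 + be*be/(2*al), -be/(2*al))", OF _ h])
    show "dt (-be/(2*al), 1/(2*al)) (1 + be*be/(2*al), -be/(2*al)) \<noteq> 0"
      using two False by (simp add: dt_def field_simps bit0_nz[OF two])
    show "prod_of (Tbl 0 al al (al*be) 1 be be (al+be*be)) (-be/(2*al), 1/(2*al)) (-be/(2*al), 1/(2*al)) = lc (1/2) (-be/(2*al), 1/(2*al)) 0 (1 + be*be/(2*al), -be/(2*al))"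
      using two False by (simp add: lc_def field_simps bit0_nz[OF two])
    show "prod_of (Tbl 0 al al (al*be) 1 be be (al+be*be)) (-be/(2*al), 1/(2*al)) (1 + be*be/(2*al), -be/(2*al)) = lc 0 (-be/(2*al), 1/(2*al)) (1/2) (1 + be*be/(2*al), -be/(2*al))"
      using two False by (simp add: lc_def field_simps bit0_nz[OF two])
    show "prod_of (Tbl 0 al al (al*be) 1 be be (al+be*be)) (1 + be*be/(2*al), -be/(2*al)) (-be/(2*al), 1/(2*al)) = lc 0 (-be/(2*al), 1/(2*al)) (1/2) (1 + be*be/(2*al), -be/(2*al))"
      using two False by (simp add: lc_def field_simps bit0_nz[OF two])
    show "prod_of (Tbl 0 al al (al*be) 1 be be (al+be*be)) (1 + be*be/(2*al), -be/(2*al)) (1 + be*be/(2*al), -be/(2*al)) = lc (2*al+be*be/2) (-be/(2*al), 1/(2*al)) 0 (1 + be*be/(2*al), -be/(2*al))"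
      using two False by (simp add: lc_def field_simps bit0_nz[OF two])
    show "G (Tbl (1/2) 0 0 (2*al+be*be/2) 0 (1/2) (1/2) 0) B'" if "diassoc (Tbl (1/2) 0 0 (2*al+be*be/2) 0 (1/2) (1/2) 0) B'" for B'
      using E8[OF two that] .
  qed
next
  case al: True
  show ?thesis
  proof (cases "be = 0")
    case True
    then show ?thesis using E1 h al by simp
  next
    case False
    show ?thesis
    proof (rule red[where u="(0, 1/(be*be))" and w="(1, -1/be)", OF _ h])
      show "dt (0, 1/(be*be)) (1, -1/be) \<noteq> 0" using False by (simp add: dt_def)
      show "prod_of (Tbl 0 al al (al*be) 1 be be (al+be*be)) (0, 1/(be*be)) (0, 1/(be*be)) = lc 1 (0, 1/(be*be)) 0 (1, -1/be)"
        using False al by (simp add: lc_def field_simps)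
      show "prod_of (Tbl 0 al al (al*be) 1 be be (al+be*be)) (0, 1/(be*be)) (1, -1/be) = lc 0 (0, 1/(be*be)) 0 (1, -1/be)"
        using False al by (simp add: lc_def field_simps)
      show "prod_of (Tbl 0 al al (al*be) 1 be be (al+be*be)) (1, -1/be) (0, 1/(be*be)) = lc 0 (0, 1/(be*be)) 0 (1, -1/be)"
        using False al by (simp add: lc_def field_simps)
      show "prod_of (Tbl 0 al al (al*be) 1 be be (al+be*be)) (1, -1/be) (1, -1/be) = lc 0 (0, 1/(be*be)) 0 (1, -1/be)"
        using False al by (simp add: lc_def field_simps)
      show "G (Tbl 1 0 0 0 0 0 0 0) B'" if "diassoc (Tbl 1 0 0 0 0 0 0 0) B'" for B'
        using E2[OF that] .
    qed
  qed
qed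

lemma MI: assumes two: "(2::'a::field) \<noteq> 0" and h: "diassoc (Tbl 1 al (-al) 0 0 be (1-be) 0) B"
  shows "G (Tbl 1 al (-al) 0 0 be (1-be) (0::'a)) B"
proof -
  note q = da[OF h]
  have e: "al = 0" "be * be = be"
    using q[of "(1,0)" "(1,0)" "(0,1)"] q[of "(0,1)" "(1,0)" "(1,0)"] by (auto simp: algebra_simps)
  from idem01[OF e(2)] show ?thesis
  proof
    assume "be = 1"
    then show ?thesis using E4 h e by simp
  next
    assume b0: "be = 0"
    show ?thesis
    proof (rule red[where u="(1/2, 0)" and w="(0, 1)", OF _ h])
      show "dt (1/2, 0) (0, 1) \<noteq> (0::'a)" using two by (simp add: dt_def)
      show "prod_of (Tbl 1 al (-al) 0 0 be (1-be) 0) (1/2, 0) (1/2, 0) = lc (1/2) (1/2, 0) 0 (0, 1)"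
        using e b0 two by (simp add: lc_def field_simps bit0_nz[OF two])
      show "prod_of (Tbl 1 al (-al) 0 0 be (1-be) 0) (1/2, 0) (0, 1) = lc 0 (1/2, 0) 0 (0, 1)"
        using e b0 two by (simp add: lc_def field_simps)
      show "prod_of (Tbl 1 al (-al) 0 0 be (1-be) 0) (0, 1) (1/2, 0) = lc 0 (1/2, 0) (1/2) (0, 1)"
        using e b0 two by (simp add: lc_def field_simps)
      show "prod_of (Tbl 1 al (-al) 0 0 be (1-be) 0) (0, 1) (0, 1) = lc 0 (1/2, 0) 0 (0::'a, 1)"
        using e b0 two by (simp add: lc_def field_simps)
      show "G (Tbl (1/2) 0 0 0 0 0 (1/2) (0::'a)) B'" if "diassoc (Tbl (1/2) 0 0 0 0 0 (1/2) (0::'a)) B'" for B'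
        using E5[OF two that] .
    qed
  qed
qed



lemma lc_lc: "lc al w be (lc al v be w) = lc (be*al) v (al + be*be) w"
  by (cases v; cases w) (simp add: lc_def algebra_simps)

lemma caseII: assumes two: "(2::'a::field) \<noteq> 0" and h: "diassoc A B" and d: "dt v (prod_of A v v) \<noteq> 0"
  shows "G A (B::'a tbl)"
proof -
  define w where "w = prod_of A v v"
  have d': "dt v w \<noteq> 0" using d w_def by simp
  obtain al be where ab: "cf v w (prod_of A v w) = (al, be)" by (cases "cf v w (prod_of A v w)")
  have assoc: "\<And>x y z. prod_of A (prod_of A x y) z = prod_of A x (prod_of A y z)" using da[OF h] by blast
  have vv: "prod_of A v v = lc 0 v 1 w" unfolding w_def by (cases v; cases "prod_of A v v") (simp add: lc_def)
  have vw: "prod_of A v w = lc al v be w" using expand[OF d', of "prod_of A v w"] ab by simp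
  have wv: "prod_of A w v = lc al v be w" using assoc[of v v v] vw unfolding w_def by simp
  have ww: "prod_of A w w = lc (be*al) v (al+be*be) w"
  proof -
    have "prod_of A w w = prod_of A v (prod_of A v w)" using assoc[of v v w] unfolding w_def by simp
    also have "\<dots> = lc al w be (lc al v be w)" unfolding vw prod_lc_r using vw w_def by simp
    finally show ?thesis using lc_lc by simp
  qed
  show ?thesis
    apply (rule red[OF d' h vv vw wv])
    using ww apply (simp add: mult.commute)
    using M2[OF two] by (simp add: mult.commute)
qed



lemma caseI: assumes two: "(2::'a::field) \<noteq> 0" and h: "diassoc A B" and nd: "\<forall>x. dt x (prod_of A x x) = 0"
  and nz: "\<exists>x y. prod_of A x y \<noteq> (0,0)"
  shows "G A (B::'a tbl)"
proof -
  obtain a1 a2 a3 a4 b1 b2 b3 b4 where A: "A = Tbl a1 a2 a3 a4 b1 b2 b3 (b4::'a)" by (cases A)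
  have e1: "b1 = 0" using nd[rule_format, of "(1,0)"] unfolding A by (simp add: dt_def)
  have e2: "a4 = 0" using nd[rule_format, of "(0,1)"] unfolding A by (simp add: dt_def)
  have s1: "b2+b3+b4 - a1 - a2 - a3 = 0" using nd[rule_format, of "(1,1)"] e1 e2 unfolding A by (simp add: dt_def algebra_simps)
  have s2: "-b2-b3+b4 + a1 - a2 - a3 = 0" using nd[rule_format, of "(1,-1)"] e1 e2 unfolding A by (simp add: dt_def algebra_simps)
  have "(b2+b3+b4 - a1 - a2 - a3) + (-b2-b3+b4 + a1 - a2 - a3) = 2 * (b4 - (a2 + a3))" by (simp add: algebra_simps mult_2)
  then have "2 * (b4 - (a2 + a3)) = 0" using s1 s2 by simp
  then have "b4 - (a2 + a3) = 0" using two by (metis mult_eq_0_iff)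
  then have e3: "b4 = a2 + a3" by simp
  have e4: "b3 = a1 - b2" using s1 e3 by (simp add: algebra_simps)
  define c where "c = a2 + a3"
  have a2: "a2 = c - a3" using c_def by simp
  have A': "A = Tbl a1 (c-a3) a3 0 0 b2 (a1-b2) c" using A e1 e2 e3 e4 c_def by simp
  have h': "diassoc (Tbl a1 (c-a3) a3 0 0 b2 (a1-b2) c) B" using h A' by simp
  show ?thesis
  proof (cases "a1 = 0")
    case False
    show ?thesis unfolding A'
    proof (rule red[where u="(1/a1, 0)" and w="(c, -a1)", OF _ h'])
      show "dt (1/a1, 0) (c, -a1) \<noteq> 0" using False by (simp add: dt_def)
      show "prod_of (Tbl a1 (c-a3) a3 0 0 b2 (a1-b2) c) (1/a1, 0) (1/a1, 0) = lc 1 (1/a1, 0) 0 (c, -a1)"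
        using False by (simp add: lc_def field_simps)
      show "prod_of (Tbl a1 (c-a3) a3 0 0 b2 (a1-b2) c) (1/a1, 0) (c, -a1) = lc (a1*a3 - b2*c) (1/a1, 0) (b2/a1) (c, -a1)"
        using False by (simp add: lc_def field_simps; simp add: algebra_simps)
      show "prod_of (Tbl a1 (c-a3) a3 0 0 b2 (a1-b2) c) (c, -a1) (1/a1, 0) = lc (-(a1*a3 - b2*c)) (1/a1, 0) (1 - b2/a1) (c, -a1)"
        using False by (simp add: lc_def field_simps; simp add: algebra_simps)
      show "prod_of (Tbl a1 (c-a3) a3 0 0 b2 (a1-b2) c) (c, -a1) (c, -a1) = lc 0 (1/a1, 0) 0 (c, -a1)"
        using False by (simp add: lc_def field_simps; simp add: algebra_simps)
      show "G (Tbl 1 (a1*a3 - b2*c) (-(a1*a3 - b2*c)) 0 0 (b2/a1) (1 - b2/a1) 0) B'"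
        if "diassoc (Tbl 1 (a1*a3 - b2*c) (-(a1*a3 - b2*c)) 0 0 (b2/a1) (1 - b2/a1) 0) B'" for B'
        using MI[OF two that] .
    qed
  next
    case a10: True
    show ?thesis
    proof (cases "c = 0")
      case False
      show ?thesis unfolding A'
      proof (rule red[where u="(0, 1/c)" and w="(c, 0)", OF _ h'])
        show "dt (0, 1/c) (c, 0) \<noteq> 0" using False by (simp add: dt_def)
        show "prod_of (Tbl a1 (c-a3) a3 0 0 b2 (a1-b2) c) (0, 1/c) (0, 1/c) = lc 1 (0, 1/c) 0 (c, 0)"
          using False a10 by (simp add: lc_def field_simps)
        show "prod_of (Tbl a1 (c-a3) a3 0 0 b2 (a1-b2) c) (0, 1/c) (c, 0) = lc (-b2*c) (0, 1/c) (a3/c) (c, 0)"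
          using False a10 by (simp add: lc_def field_simps)
        show "prod_of (Tbl a1 (c-a3) a3 0 0 b2 (a1-b2) c) (c, 0) (0, 1/c) = lc (-(-b2*c)) (0, 1/c) (1 - a3/c) (c, 0)"
          using False a10 by (simp add: lc_def field_simps)
        show "prod_of (Tbl a1 (c-a3) a3 0 0 b2 (a1-b2) c) (c, 0) (c, 0) = lc 0 (0, 1/c) 0 (c, 0)"
          using False a10 by (simp add: lc_def field_simps)
        show "G (Tbl 1 (-b2*c) (-(-b2*c)) 0 0 (a3/c) (1 - a3/c) 0) B'"
          if "diassoc (Tbl 1 (-b2*c) (-(-b2*c)) 0 0 (a3/c) (1 - a3/c) 0) B'" for B'
          using MI[OF two that] .
      qed
    next
      case c0: True
      note q = da[OF h']
      have f1: "b2 * b2 = 0" using q[of "(1,0)" "(1,0)" "(0,1)"] a10 by simp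
      have f2: "a3 * a3 = 0" using q[of "(0,1)" "(0,1)" "(1,0)"] a10 c0 by simp
      have "b2 = 0" "a3 = 0" using f1 f2 by simp_all
      then have "a2 = 0" using c0 a2 by simp
      then have "A = Tbl 0 0 0 0 0 0 0 0" using A' a10 c0 \<open>b2 = 0\<close> \<open>a3 = 0\<close> by simp
      then have False using nz by auto
      then show ?thesis ..
    qed
  qed
qed


theorem mainTheorem4:
  assumes "(2::'a::field) \<noteq> 0" and "(3::'a) \<noteq> 0"
  shows "(\<forall>A B :: 'a tbl. diassoc A B \<and> (\<exists>x y. prod_of A x y \<noteq> (0, 0)) \<longrightarrow>
            (\<exists>i\<in>{1..8::nat}. \<exists>t. dialg_iso (A, B) (item i t)))
       \<and> (\<forall>i\<in>{1..8::nat}. \<forall>j\<in>{1..8::nat}. \<forall>t s :: 'a.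
            i \<noteq> j \<longrightarrow> \<not> dialg_iso (item i t) (item j s))"
proof (intro conjI allI impI ballI)
  fix A B :: "'a tbl"
  assume h: "diassoc A B \<and> (\<exists>x y. prod_of A x y \<noteq> (0, 0))"
  have "G A B"
  proof (cases "\<exists>x. dt x (prod_of A x x) \<noteq> 0")
    case True
    then obtain x where "dt x (prod_of A x x) \<noteq> 0" by blast
    then show ?thesis using caseII[OF assms(1)] h by blast
  next
    case False
    then show ?thesis using caseI[OF assms(1)] h by blast
  qed
  then show "\<exists>i\<in>{1..8::nat}. \<exists>t. dialg_iso (A, B) (item i t)" unfolding G_def .
next
  fix i j :: nat and t s :: 'a
  assume "i \<in> {1..8}" "j \<in> {1..8}" "i \<noteq> j"
  then show "\<not> dialg_iso (item i t) (item j s)" using part2[OF assms(1)] by blast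
qed

end
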